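(* Let $\gamma:=2\Delta\lambda\max\{\lambda,\mu\}$. Then for all $\mathbf x\in\mathbb R^p$, $\mathbf b\in\mathbb R^V$, $\mathbf w\in\mathbb R^E$ and all nodes $v\in V$ of depth $t$, $$|f_{\mathfrak A,v}(\mathbf x,\mathbf w,\mathbf b)|\le\gamma^t(\|\mathbf w\|_\infty+1)^t(\|\mathbf x\|_\infty+\|\mathbf b\|_\infty+1).$$
   Context: $\mathfrak A=(V,E,(\mathfrak a_v)_{v\in V})$ is an FNN architecture: $(V,E)$ is a finite dag and each $\mathfrak a_v:\mathbb R\to\mathbb R$ is Lipschitz continuous. The sources are the input nodes $X_1,\dots,X_p$, the sinks the output nodes $Y_1,\dots,Y_q$. For $\mathbf x\in\mathbb R^p$, $\mathbf w=(w_e)_{e\in E}$, $\mathbf b=(b_v)_{v\in V}$: $f_{\mathfrak A,X_i}(\mathbf x,\mathbf w,\mathbf b)=x_i$ and, for non-input $v$, $f_{\mathfrak A,v}(\mathbf x,\mathbf w,\mathbf b)=\mathfrak a_v\big(b_v+\sum_{u:uv\in E}f_{\mathfrak A,u}(\mathbf x,\mathbf w,\mathbf b)\,w_{uv}\big)$; $\mathfrak A(\mathbf x,\mathbf w,\mathbf b)=(f_{\mathfrak A,Y_1},\dots,f_{\mathfrak A,Y_q})(\mathbf x,\mathbf w,\mathbf b)$. The depth of a node is the length of the longest path from a source to it; $d$ is the depth of the dag (maximum depth of a sink); $\Delta$ is the maximum in-degree, and it is assumed that $\Delta\ge1$. $\lambda\in\mathbb N_{>0}$ is a Lipschitz constant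 of every $\mathfrak a_v$, and $\mu:=\max_{v\in V}\lceil|\mathfrak a_v(0)|\rceil$. Norms are $\ell_\infty$. *)

theory Defs
  imports "HOL-Analysis.Analysis"
begin

text \<open>An FNN architecture on a finite dag (V, E). Edges are pairs (u,v) meaning u -> v.
  Input nodes X_0,...,X_{p-1} are the sources of the dag (bijective enumeration X).\<close>

definition sources :: "'v set \<Rightarrow> ('v \<times> 'v) set \<Rightarrow> 'v set" where
  "sources V E = {v \<in> V. \<forall>u. (u, v) \<notin> E}"

definition fnn_dag :: "'v set \<Rightarrow> ('v \<times> 'v) set \<Rightarrow> bool" where
  "fnn_dag V E \<longleftrightarrow> finite V \<and> E \<subseteq> V \<times> V \<and> acyclic E"

definition depth :: "'v set \<Rightarrow> ('v \<times> 'v) set \<Rightarrow> 'v \<Rightarrow> nat" where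
  "depth V E v = Max {n. \<exists>u \<in> sources V E. (u, v) \<in> E ^^ n}"

definition max_indeg :: "'v set \<Rightarrow> ('v \<times> 'v) set \<Rightarrow> nat" where
  "max_indeg V E = Max ((\<lambda>v. card {u. (u, v) \<in> E}) ` V)"

definition sup_norm :: "'i set \<Rightarrow> ('i \<Rightarrow> real) \<Rightarrow> real" where
  "sup_norm I z = Max (insert 0 ((\<lambda>i. \<bar>z i\<bar>) ` I))"

text \<open>F is the family of node functions f_{A,v}(x,w,b), v \<in> V: it satisfies the defining
  recursion (which determines it uniquely on V since (V,E) is a finite dag).\<close>
definition node_funs ::
  "'v set \<Rightarrow> ('v \<times> 'v) set \<Rightarrow> ('v \<Rightarrow> real \<Rightarrow> real) \<Rightarrow> (nat \<Rightarrow> 'v) \<Rightarrow> nat \<Rightarrow>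
   (nat \<Rightarrow> real) \<Rightarrow> ('v \<times> 'v \<Rightarrow> real) \<Rightarrow> ('v \<Rightarrow> real) \<Rightarrow> ('v \<Rightarrow> real) \<Rightarrow> bool" where
  "node_funs V E a X p x w b F \<longleftrightarrow>
     (\<forall>i<p. F (X i) = x i) \<and>
     (\<forall>v \<in> V - sources V E. F v = a v (b v + (\<Sum>u \<in> {u. (u, v) \<in> E}. F u * w (u, v))))"

end

theory Submission
  imports Defs
begin

lemma path_chain:
  assumes "\<forall>i<n. (f i, f (Suc i)) \<in> R"
  shows "i + Suc k \<le> n \<Longrightarrow> (f i, f (i + Suc k)) \<in> R\<^sup>+"
proof (induction k)
  case 0 then show ?case using assms by auto
next
  case (Suc k)
  then have "(f i, f (i + Suc k)) \<in> R\<^sup>+" by simp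
  moreover have "(f (i + Suc k), f (Suc (i + Suc k))) \<in> R" using assms Suc.prems by simp
  ultimately show ?case by (simp add: trancl_into_trancl)
qed

lemma path_bound:
  assumes "E \<subseteq> V \<times> V" "finite V" "acyclic E" "(x, y) \<in> E ^^ n"
  shows "n \<le> card V"
proof -
  obtain f where f: "f 0 = x" "f n = y" "\<forall>i<n. (f i, f (Suc i)) \<in> E"
    using assms(4) unfolding relpow_fun_conv by blast
  have lt: "f i \<noteq> f j" if ijl: "i < j" "j \<le> n" for i j
  proof
    assume eq: "f i = f j"
    obtain k where k0: "j = Suc (i + k)" using less_imp_Suc_add[OF ijl(1)] by blast
    then have k: "j = i + Suc k" by simp
    have "(f i, f (i + Suc k)) \<in> E\<^sup>+" using path_chain[OF f(3), of i k] ijl(2) k by blast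
    then have "(f j, f j) \<in> E\<^sup>+" using k eq by metis
    then show False using assms(3) unfolding acyclic_def by blast
  qed
  have inj: "inj_on f {1..n}"
  proof (rule inj_onI)
    fix i j assume ij: "i \<in> {1..n}" "j \<in> {1..n}" "f i = f j"
    show "i = j"
    proof (rule linorder_cases[of i j])
      assume "i < j" then show ?thesis using lt[of i j] ij by simp
    next
      assume "j < i" then show ?thesis using lt[of j i] ij by simp
    qed
  qed
  have sub: "f ` {1..n} \<subseteq> V"
  proof
    fix z assume "z \<in> f ` {1..n}"
    then obtain i where i: "i \<in> {1..n}" "z = f i" by auto
    then obtain j where "i = Suc j" "j < n" by (cases i) auto
    then have "(f j, f i) \<in> E" using f(3) by auto
    then show "z \<in> V" using assms(1) i by auto
  qed
  have "card {1..n} = card (f ` {1..n})" using card_image[OF inj] by simp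
  also have "\<dots> \<le> card V" using card_mono[OF assms(2) sub] .
  finally show ?thesis by simp
qed


theorem lemma6p5:
  fixes V :: "'v set" and E :: "('v \<times> 'v) set" and a :: "'v \<Rightarrow> real \<Rightarrow> real"
    and X :: "nat \<Rightarrow> 'v" and p :: nat and lam :: nat
    and x :: "nat \<Rightarrow> real" and w :: "'v \<times> 'v \<Rightarrow> real" and b :: "'v \<Rightarrow> real"
    and F :: "'v \<Rightarrow> real" and v :: 'v and t :: nat
  assumes dag: "fnn_dag V E"
    and inputs: "bij_betw X {..<p} (sources V E)"
    and lam_pos: "lam > 0"
    and lip: "\<forall>u \<in> V. (real lam)-lipschitz_on UNIV (a u)"
    and Delta: "max_indeg V E \<ge> 1"
    and F: "node_funs V E a X p x w b F"
    and v: "v \<in> V"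
    and t: "depth V E v = t"
  shows "let \<mu> = Max ((\<lambda>u. nat \<lceil>\<bar>a u 0\<bar>\<rceil>) ` V);
             \<gamma> = 2 * real (max_indeg V E) * real lam * real (max lam \<mu>)
         in \<bar>F v\<bar> \<le> \<gamma> ^ t * (sup_norm E w + 1) ^ t * (sup_norm {..<p} x + sup_norm V b + 1)"
proof -
  define \<mu> where "\<mu> = Max ((\<lambda>u. nat \<lceil>\<bar>a u 0\<bar>\<rceil>) ` V)"
  define D where "D = max_indeg V E"
  define M where "M = max lam \<mu>"
  define \<gamma> where "\<gamma> = 2 * real D * real lam * real M"
  define Wn where "Wn = sup_norm E w"
  define Xn where "Xn = sup_norm {..<p} x"
  define Bn where "Bn = sup_norm V b"
  define R where "R = Xn + Bn + 1"
  define C where "C = (\<lambda>s::nat. \<gamma> ^ s * (Wn + 1) ^ s * R)"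
  have finV: "finite V" and EV: "E \<subseteq> V \<times> V" and acyc: "acyclic E"
    using dag unfolding fnn_dag_def by auto
  have finE: "finite E" using finite_subset[OF EV] finV by auto
  have wfE: "wf E" using finite_acyclic_wf[OF finE acyc] .
  have sn_ge0: "sup_norm I z \<ge> 0" if "finite I" for I :: "'i set" and z
    unfolding sup_norm_def using that by (simp add: Max_ge_iff)
  have sn_ge: "\<bar>z i\<bar> \<le> sup_norm I z" if "finite I" "i \<in> I" for I :: "'i set" and z i
    unfolding sup_norm_def using that by (simp add: Max_ge_iff)
  have Wn0: "Wn \<ge> 0" and Xn0: "Xn \<ge> 0" and Bn0: "Bn \<ge> 0"
    using sn_ge0 finE finV unfolding Wn_def Xn_def Bn_def by auto
  have R1: "R \<ge> 1" unfolding R_def using Xn0 Bn0 by simp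
  have M1: "real M \<ge> 1" unfolding M_def using lam_pos by simp
  have D1: "real D \<ge> 1" unfolding D_def using Delta by simp
  have lam1: "real lam \<ge> 1" using lam_pos by simp
  have g1: "\<gamma> \<ge> 1"
  proof -
    have "1 * 1 * 1 \<le> real D * real lam * real M" using D1 M1 lam1
      by (intro mult_mono) auto
    then show ?thesis unfolding \<gamma>_def by simp
  qed
  have Cmono: "C s \<le> C s'" if "s \<le> s'" for s s'
  proof -
    have "\<gamma> ^ s * (Wn + 1) ^ s = (\<gamma> * (Wn + 1)) ^ s" by (simp add: power_mult_distrib)
    also have "\<dots> \<le> (\<gamma> * (Wn + 1)) ^ s'"
      using that g1 Wn0 by (intro power_increasing) (use mult_mono[of 1 \<gamma> 1 "Wn + 1"] in auto)
    also have "\<dots> = \<gamma> ^ s' * (Wn + 1) ^ s'" by (simp add: power_mult_distrib)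
    finally show ?thesis unfolding C_def using R1 by (intro mult_right_mono) auto
  qed
  have C0: "C s \<ge> R" for s
    using Cmono[of 0 s] by (simp add: C_def)
  define DS where "DS = (\<lambda>v. {n. \<exists>u \<in> sources V E. (u, v) \<in> E ^^ n})"
  have dep: "depth V E v = Max (DS v)" for v unfolding depth_def DS_def by simp
  have DSfin: "finite (DS v)" for v
  proof -
    have "DS v \<subseteq> {..card V}" unfolding DS_def using path_bound[OF EV finV acyc] by auto
    then show ?thesis using finite_subset by blast
  qed
  have DSne: "DS v \<noteq> {}" if "v \<in> V" for v
    using wfE that
  proof (induction v rule: wf_induct_rule)
    case (less v)
    show ?case
    proof (cases "v \<in> sources V E")
      case True
      then have "0 \<in> DS v" unfolding DS_def by auto
      then show ?thesis by auto
    next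
      case False
      then obtain u where u: "(u, v) \<in> E" using less.prems unfolding sources_def by auto
      then have "u \<in> V" using EV by auto
      then obtain n where "n \<in> DS u" using less.IH[OF u] by auto
      then obtain s where "s \<in> sources V E" "(s, u) \<in> E ^^ n" unfolding DS_def by auto
      then have "Suc n \<in> DS v" unfolding DS_def using u by auto
      then show ?thesis by auto
    qed
  qed
  have dep_src: "depth V E v = 0" if "v \<in> sources V E" for v
  proof -
    have "DS v = {0}"
    proof -
      have "n = 0" if "n \<in> DS v" for n
      proof (rule ccontr)
        assume "n \<noteq> 0"
        then obtain m where "n = Suc m" by (cases n) auto
        then obtain s where "(s, v) \<in> E ^^ Suc m" using \<open>n \<in> DS v\<close> unfolding DS_def by auto
        then obtain z where "(z, v) \<in> E" by (metis relpow_Suc_E)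
        then show False using \<open>v \<in> sources V E\<close> unfolding sources_def by auto
      qed
      moreover have "0 \<in> DS v" using that unfolding DS_def by auto
      ultimately show ?thesis by auto
    qed
    then show ?thesis using dep by simp
  qed
  have dep_lt: "depth V E u < depth V E v" if "(u, v) \<in> E" for u v
  proof -
    have "u \<in> V" using that EV by auto
    have "depth V E u \<in> DS u" unfolding dep using Max_in[OF DSfin DSne[OF \<open>u \<in> V\<close>]] .
    then obtain s where "s \<in> sources V E" "(s, u) \<in> E ^^ depth V E u" unfolding DS_def by auto
    then have "Suc (depth V E u) \<in> DS v" unfolding DS_def using that by auto
    then have "Suc (depth V E u) \<le> Max (DS v)" using DSfin by simp
    then show ?thesis unfolding dep by simp
  qed
  have main: "\<bar>F v\<bar> \<le> C (depth V E v)" if "v \<in> V" for v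
    using wfE that
  proof (induction v rule: wf_induct_rule)
    case (less v)
    show ?case
    proof (cases "v \<in> sources V E")
      case True
      then obtain i where i: "i < p" "v = X i" using inputs unfolding bij_betw_def by auto
      then have "F v = x i" using F unfolding node_funs_def by auto
      then have "\<bar>F v\<bar> \<le> Xn" unfolding Xn_def using sn_ge[of "{..<p}" i x] i by simp
      also have "\<dots> \<le> C (depth V E v)" using C0[of "depth V E v"] Bn0 unfolding R_def by simp
      finally show ?thesis .
    next
      case False
      define P where "P = {u. (u, v) \<in> E}"
      define t' where "t' = depth V E v - 1"
      have dv: "depth V E v = Suc t'"
      proof -
        obtain u where u: "(u, v) \<in> E" using less.prems False unfolding sources_def by auto
        show ?thesis using dep_lt[OF u] unfolding t'_def by simp
      qed
      have finP: "finite P" unfolding P_def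
        using finite_subset[of "{u. (u, v) \<in> E}" V] EV finV by auto
      have cardP: "real (card P) \<le> real D"
      proof -
        have "card P \<le> D" unfolding D_def max_indeg_def P_def
          using finV less.prems by (intro Max_ge) auto
        then show ?thesis by simp
      qed
      have Fu: "\<bar>F u\<bar> \<le> C t'" if "u \<in> P" for u
      proof -
        have e: "(u, v) \<in> E" using that P_def by auto
        then have "u \<in> V" using EV by auto
        have "\<bar>F u\<bar> \<le> C (depth V E u)" using less.IH[OF e \<open>u \<in> V\<close>] .
        also have "\<dots> \<le> C t'" using Cmono dep_lt[OF e] dv by simp
        finally show ?thesis .
      qed
      have wu: "\<bar>w (u, v)\<bar> \<le> Wn" if "u \<in> P" for u
        unfolding Wn_def using sn_ge[of E "(u,v)" w] finE that P_def by auto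
      define z where "z = b v + (\<Sum>u \<in> P. F u * w (u, v))"
      have Fv: "F v = a v z" using F False less.prems unfolding node_funs_def z_def P_def by auto
      have Ct'0: "C t' \<ge> 0" using C0[of t'] R1 by simp
      have "\<bar>\<Sum>u \<in> P. F u * w (u, v)\<bar> \<le> (\<Sum>u \<in> P. \<bar>F u * w (u, v)\<bar>)" by (rule sum_abs)
      also have "\<dots> \<le> (\<Sum>u \<in> P. C t' * Wn)"
        by (intro sum_mono) (auto simp: abs_mult intro!: mult_mono Fu wu Ct'0)
      also have "\<dots> = real (card P) * (C t' * Wn)" by simp
      also have "\<dots> \<le> real D * (C t' * Wn)"
        using cardP Ct'0 Wn0 by (intro mult_right_mono) auto
      finally have sumb: "\<bar>\<Sum>u \<in> P. F u * w (u, v)\<bar> \<le> real D * (C t' * Wn)" .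
      have bv: "\<bar>b v\<bar> \<le> Bn" unfolding Bn_def using sn_ge[of V v b] finV less.prems by auto
      have zb: "\<bar>z\<bar> \<le> Bn + real D * (C t' * Wn)" unfolding z_def using sumb bv by linarith
      have lipv: "dist (a v z) (a v 0) \<le> real lam * dist z 0"
        using lipschitz_onD[of "real lam" UNIV "a v" z 0] lip less.prems by auto
      have a0: "\<bar>a v 0\<bar> \<le> real \<mu>"
      proof -
        have "nat \<lceil>\<bar>a v 0\<bar>\<rceil> \<le> \<mu>" unfolding \<mu>_def using finV less.prems by (intro Max_ge) auto
        then have "real (nat \<lceil>\<bar>a v 0\<bar>\<rceil>) \<le> real \<mu>" by linarith
        moreover have "\<bar>a v 0\<bar> \<le> real (nat \<lceil>\<bar>a v 0\<bar>\<rceil>)" by linarith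
        ultimately show ?thesis by linarith
      qed
      have "\<bar>F v\<bar> \<le> \<bar>a v 0\<bar> + real lam * \<bar>z\<bar>" using lipv Fv by (simp add: dist_real_def)
      also have "\<dots> \<le> real \<mu> + real lam * (Bn + real D * (C t' * Wn))"
        using a0 zb by (intro add_mono mult_left_mono) auto
      also have "\<dots> \<le> \<gamma> * (Wn + 1) * C t'"
      proof -
        have RC: "R \<le> C t'" using C0 .
        have e1: "real \<mu> \<le> real D * real lam * real M * C t'"
        proof -
          have "real \<mu> \<le> real M" unfolding M_def by simp
          also have "\<dots> = 1 * 1 * real M * 1" by simp
          also have "\<dots> \<le> real D * real lam * real M * C t'"
            using D1 lam1 M1 RC R1 by (intro mult_mono) auto
          finally show ?thesis .
        qed
        have e2: "real lam * Bn \<le> real D * real lam * real M * C t'"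
        proof -
          have "real lam * Bn = 1 * real lam * 1 * Bn" by simp
          also have "\<dots> \<le> real D * real lam * real M * C t'"
            using D1 lam1 M1 RC R1 Bn0 Xn0 unfolding R_def by (intro mult_mono) auto
          finally show ?thesis .
        qed
        have e3: "real lam * (real D * (C t' * Wn)) \<le> 2 * real D * real lam * real M * Wn * C t'"
        proof -
          have "real lam * (real D * (C t' * Wn)) = 1 * (real D * real lam * Wn * C t')" by simp
          also have "\<dots> \<le> (2 * real M) * (real D * real lam * Wn * C t')"
            using M1 D1 lam1 Wn0 Ct'0 by (intro mult_right_mono) auto
          finally show ?thesis by (simp add: algebra_simps)
        qed
        have "\<gamma> * (Wn + 1) * C t' = 2 * real D * real lam * real M * Wn * C t' + 2 * (real D * real lam * real M * C t')"
          unfolding \<gamma>_def by (simp add: algebra_simps)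
        then show ?thesis using e1 e2 e3 by (simp add: algebra_simps)
      qed
      also have "\<dots> = C (depth V E v)" unfolding dv C_def by (simp add: algebra_simps)
      finally show ?thesis .
    qed
  qed
  show ?thesis
    using main[OF v] unfolding Let_def C_def t \<gamma>_def D_def M_def \<mu>_def Wn_def Xn_def Bn_def R_def
    by simp
qed

end
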